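(* Let $k\geq1$ and $d_1,\dots,d_k\geq2$ be integers, let $T=W_{d_1}\otimes\cdots\otimes W_{d_k}$, and let $\mathscr{V}_{d_1,\dots,d_k}=\nu_{d_1,\dots,d_k}((\mathbb{P}^1)^k)$ be the Segre–Veronese variety. Let $\Gamma$ be any irreducible component of $\mathcal{S}(T,\mathscr{V}_{d_1,\dots,d_k})$. Then $\dim\Gamma\geq k$, and for every $p=(p_1,\dots,p_k)\in(\mathbb{P}^1)^k$ with $p_i\neq[x_i],[y_i]$ for all $i$, there exists $A\in\Gamma$ with $\nu_{d_1,\dots,d_k}(p)\in A$.
   Context: On the $i$-th factor use a basis $\{x_i,y_i\}$ of $\mathbb{C}^2$ and identify $S^d\mathbb{C}^2$ with binary forms; $W_{d_i}=x_i^{d_i-1}y_i$. $\nu_{d_1,\dots,d_k}:(\mathbb{P}^1)^k\to\mathbb{P}(S^{d_1}\mathbb{C}^2\otimes\cdots\otimes S^{d_k}\mathbb{C}^2)$ sends $([v_1],\dots,[v_k])\mapsto[v_1^{d_1}\otimes\cdots\otimes v_k^{d_k}]$. For a nondegenerate variety $X$ and a point $q$, $R_X(q)$ is the minimal $r$ such that $q$ lies in the span of $r$ points of $X$, and $\mathcal{S}(q,X)=\{(x_1,\dots,x_r)\in X^{(r)}: q\in\langle x_1,\dots,x_r\rangle\}$ with $r=R_X(q)$, where $X^{(r)}=X^r/\mathfrak{S}_r$ is the symmetric power; this is a constructible set whose elements are regarded as sets of $r$ points of $X$. *)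

theory Defs
  imports "HOL-Analysis.Analysis"
begin

inductive_set polyfun :: "((nat \<Rightarrow> complex) \<Rightarrow> complex) set" where
  pf_const: "(\<lambda>x. c) \<in> polyfun"
| pf_var: "(\<lambda>x. x i) \<in> polyfun"
| pf_add: "f \<in> polyfun \<Longrightarrow> g \<in> polyfun \<Longrightarrow> (\<lambda>x. f x + g x) \<in> polyfun"
| pf_mult: "f \<in> polyfun \<Longrightarrow> g \<in> polyfun \<Longrightarrow> (\<lambda>x. f x * g x) \<in> polyfun"

text \<open>C^n, realised as the functions vanishing from index n on.\<close>
definition affsp :: "nat \<Rightarrow> (nat \<Rightarrow> complex) set" where
  "affsp n = {x. \<forall>i\<ge>n. x i = 0}"

definition zeroset :: "((nat \<Rightarrow> complex) \<Rightarrow> complex) set \<Rightarrow> (nat \<Rightarrow> complex) set" where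
  "zeroset F = {x. \<forall>f\<in>F. f x = 0}"

definition zariski :: "nat \<Rightarrow> (nat \<Rightarrow> complex) topology" where
  "zariski n = topology (\<lambda>U. \<exists>F. F \<subseteq> polyfun \<and> U = affsp n - zeroset F)"

definition line :: "complex \<times> complex \<Rightarrow> (complex \<times> complex) set" where
  "line v = {(c * fst v, c * snd v) | c. True}"

text \<open>A point of (P^1)^k: a k-tuple of lines in C^2 (entries beyond k fixed to {}).\<close>
definition P1k :: "nat \<Rightarrow> (nat \<Rightarrow> (complex \<times> complex) set) set" where
  "P1k k = {p. (\<forall>i<k. \<exists>v. v \<noteq> 0 \<and> p i = line v) \<and> (\<forall>i\<ge>k. p i = {})}"

text \<open>A tensor is given by its coefficients on the monomials
  x_1^{d_1-e_1} y_1^{e_1} \<cdots> x_k^{d_k-e_k} y_k^{e_k}, indexed by e.\<close>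
definition mindex :: "(nat \<Rightarrow> nat) \<Rightarrow> nat \<Rightarrow> (nat \<Rightarrow> nat) \<Rightarrow> bool" where
  "mindex d k e \<longleftrightarrow> (\<forall>i<k. e i \<le> d i) \<and> (\<forall>i\<ge>k. e i = 0)"

text \<open>v_1^{d_1} \<otimes> ... \<otimes> v_k^{d_k} with v_i = a_i x_i + b_i y_i.\<close>
definition nuv :: "(nat \<Rightarrow> nat) \<Rightarrow> nat \<Rightarrow> (nat \<Rightarrow> complex \<times> complex) \<Rightarrow> (nat \<Rightarrow> nat) \<Rightarrow> complex" where
  "nuv d k v e = (if mindex d k e then
      (\<Prod>i<k. of_nat (d i choose e i) * fst (v i) ^ (d i - e i) * snd (v i) ^ e i) else 0)"

text \<open>T = W_{d_1} \<otimes> ... \<otimes> W_{d_k}, W_d = x^{d-1} y.\<close>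
definition Wtensor :: "(nat \<Rightarrow> nat) \<Rightarrow> nat \<Rightarrow> (nat \<Rightarrow> nat) \<Rightarrow> complex" where
  "Wtensor d k e = (if mindex d k e \<and> (\<forall>i<k. e i = 1) then 1 else 0)"

definition in_span :: "(nat \<Rightarrow> nat) \<Rightarrow> nat \<Rightarrow> ((nat \<Rightarrow> nat) \<Rightarrow> complex)
    \<Rightarrow> (nat \<Rightarrow> (complex \<times> complex) set) set \<Rightarrow> bool" where
  "in_span d k q A \<longleftrightarrow> finite A \<and>
     (\<exists>c v. (\<forall>p\<in>A. \<forall>i<k. v p i \<noteq> 0 \<and> p i = line (v p i)) \<and>
            q = (\<lambda>e. \<Sum>p\<in>A. c p * nuv d k (v p) e))"

definition SV_rank :: "(nat \<Rightarrow> nat) \<Rightarrow> nat \<Rightarrow> ((nat \<Rightarrow> nat) \<Rightarrow> complex) \<Rightarrow> nat" where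
  "SV_rank d k q = (LEAST r. \<exists>A. A \<subseteq> P1k k \<and> card A = r \<and> in_span d k q A)"

definition decomp_set :: "(nat \<Rightarrow> nat) \<Rightarrow> nat \<Rightarrow> ((nat \<Rightarrow> nat) \<Rightarrow> complex)
    \<Rightarrow> (nat \<Rightarrow> (complex \<times> complex) set) set set" where
  "decomp_set d k q = {A. A \<subseteq> P1k k \<and> card A = SV_rank d k q \<and> in_span d k q A}"

text \<open>Coordinates of r k-tuples of vectors of C^2 inside C^{2kr}.\<close>
definition tup_point :: "nat \<Rightarrow> (nat \<Rightarrow> complex) \<Rightarrow> nat \<Rightarrow> nat \<Rightarrow> (complex \<times> complex) set" where
  "tup_point k x j = (\<lambda>i. if i < k then line (x (2 * (k * j + i)), x (2 * (k * j + i) + 1)) else {})"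

definition tup_dom :: "nat \<Rightarrow> nat \<Rightarrow> (nat \<Rightarrow> complex) set" where
  "tup_dom k r = {x \<in> affsp (2 * k * r).
      (\<forall>j<r. \<forall>i<k. (x (2 * (k * j + i)), x (2 * (k * j + i) + 1)) \<noteq> 0) \<and>
      (\<forall>j<r. \<forall>j'<r. j \<noteq> j' \<longrightarrow> tup_point k x j \<noteq> tup_point k x j')}"

definition tup_set :: "nat \<Rightarrow> nat \<Rightarrow> (nat \<Rightarrow> complex) \<Rightarrow> (nat \<Rightarrow> (complex \<times> complex) set) set" where
  "tup_set k r x = tup_point k x ` {..<r}"

text \<open>Quotient of the Zariski topology on the (multi-cone over the) distinct locus of X^r.\<close>
definition sym_zariski :: "nat \<Rightarrow> nat \<Rightarrow> (nat \<Rightarrow> (complex \<times> complex) set) set topology" where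
  "sym_zariski k r = topology (\<lambda>U. U \<subseteq> tup_set k r ` tup_dom k r \<and>
      openin (subtopology (zariski (2 * k * r)) (tup_dom k r)) (tup_dom k r \<inter> tup_set k r -` U))"

definition irreducible_in :: "'a topology \<Rightarrow> 'a set \<Rightarrow> bool" where
  "irreducible_in X S \<longleftrightarrow> S \<noteq> {} \<and> S \<subseteq> topspace X \<and>
     (\<forall>C1 C2. closedin X C1 \<and> closedin X C2 \<and> S \<subseteq> C1 \<union> C2 \<longrightarrow> S \<subseteq> C1 \<or> S \<subseteq> C2)"

definition irreducible_component :: "'a topology \<Rightarrow> 'a set \<Rightarrow> 'a set \<Rightarrow> bool" where
  "irreducible_component X S G \<longleftrightarrow> G \<subseteq> S \<and> irreducible_in X G \<and>
     (\<forall>G'. G \<subseteq> G' \<and> G' \<subseteq> S \<and> irreducible_in X G' \<longrightarrow> G' = G)"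

definition dim_ge :: "'a topology \<Rightarrow> 'a set \<Rightarrow> nat \<Rightarrow> bool" where
  "dim_ge X S n \<longleftrightarrow> (\<exists>Z :: nat \<Rightarrow> 'a set.
     (\<forall>j\<le>n. closedin (subtopology X S) (Z j) \<and> irreducible_in X (Z j)) \<and>
     (\<forall>j<n. Z j \<subset> Z (Suc j)))"

end

theory Submission
  imports Defs "HOL-Computational_Algebra.Polynomial"
begin


lemma zerosetD: "x \<in> zeroset F \<Longrightarrow> f \<in> F \<Longrightarrow> f x = 0"
  unfolding zeroset_def by simp

lemma zerosetI: "(\<And>f. f \<in> F \<Longrightarrow> f x = 0) \<Longrightarrow> x \<in> zeroset F"
  unfolding zeroset_def by simp

lemma zeroset_UN: "zeroset (\<Union>U\<in>K. G U) = (\<Inter>U\<in>K. zeroset (G U))"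
  unfolding zeroset_def by auto

lemma zeroset_Un: "zeroset F \<union> zeroset G = zeroset {(\<lambda>x. f x * g x) | f g. f \<in> F \<and> g \<in> G}"
proof
  show "zeroset F \<union> zeroset G \<subseteq> zeroset {(\<lambda>x. f x * g x) | f g. f \<in> F \<and> g \<in> G}"
  proof
    fix x assume "x \<in> zeroset F \<union> zeroset G"
    then have "(\<forall>f\<in>F. f x = 0) \<or> (\<forall>g\<in>G. g x = 0)" unfolding zeroset_def by blast
    then have "h x = 0" if "h \<in> {(\<lambda>x. f x * g x) | f g. f \<in> F \<and> g \<in> G}" for h
    proof -
      from that obtain f g where "h = (\<lambda>x. f x * g x)" "f \<in> F" "g \<in> G" by blast
      with \<open>(\<forall>f\<in>F. f x = 0) \<or> (\<forall>g\<in>G. g x = 0)\<close> show ?thesis by auto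
    qed
    then show "x \<in> zeroset {(\<lambda>x. f x * g x) | f g. f \<in> F \<and> g \<in> G}"
      unfolding zeroset_def by blast
  qed
  show "zeroset {(\<lambda>x. f x * g x) | f g. f \<in> F \<and> g \<in> G} \<subseteq> zeroset F \<union> zeroset G"
  proof
    fix x assume x: "x \<in> zeroset {(\<lambda>x. f x * g x) | f g. f \<in> F \<and> g \<in> G}"
    have x': "f x * g x = 0" if "f \<in> F" "g \<in> G" for f g
    proof -
      have "(\<lambda>x. f x * g x) \<in> {(\<lambda>x. f x * g x) | f g. f \<in> F \<and> g \<in> G}" using that by blast
      from zerosetD[OF x this] show ?thesis .
    qed
    show "x \<in> zeroset F \<union> zeroset G"
    proof (cases "\<forall>f\<in>F. f x = 0")
      case True then show ?thesis unfolding zeroset_def by blast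
    next
      case False
      then obtain f where f: "f \<in> F" "f x \<noteq> 0" by blast
      have "g x = 0" if "g \<in> G" for g using x'[OF f(1) that] f(2) by simp
      then show ?thesis unfolding zeroset_def by blast
    qed
  qed
qed

lemma istop_zariski: "istopology (\<lambda>U. \<exists>F. F \<subseteq> polyfun \<and> U = affsp n - zeroset F)"
  unfolding istopology_def
proof (intro conjI allI impI)
  fix S T assume "\<exists>F. F \<subseteq> polyfun \<and> S = affsp n - zeroset F" "\<exists>F. F \<subseteq> polyfun \<and> T = affsp n - zeroset F"
  then obtain F G where FG: "F \<subseteq> polyfun" "S = affsp n - zeroset F" "G \<subseteq> polyfun" "T = affsp n - zeroset G" by blast
  show "\<exists>H. H \<subseteq> polyfun \<and> S \<inter> T = affsp n - zeroset H"
  proof (rule exI[of _ "{(\<lambda>x. f x * g x) | f g. f \<in> F \<and> g \<in> G}"], intro conjI)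
    show "{(\<lambda>x. f x * g x) | f g. f \<in> F \<and> g \<in> G} \<subseteq> polyfun"
      using FG(1,3) by (auto intro: polyfun.pf_mult)
    show "S \<inter> T = affsp n - zeroset {(\<lambda>x. f x * g x) | f g. f \<in> F \<and> g \<in> G}"
      unfolding FG(2,4) zeroset_Un[symmetric] by blast
  qed
next
  fix K assume K: "\<forall>U\<in>K. \<exists>F. F \<subseteq> polyfun \<and> U = affsp n - zeroset F"
  define FF where "FF U = (SOME F. F \<subseteq> polyfun \<and> U = affsp n - zeroset F)" for U
  have FF: "FF U \<subseteq> polyfun \<and> U = affsp n - zeroset (FF U)" if "U \<in> K" for U
    unfolding FF_def using someI_ex[OF K[rule_format, OF that]] .
  show "\<exists>F. F \<subseteq> polyfun \<and> \<Union>K = affsp n - zeroset F"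
  proof (rule exI[of _ "\<Union>U\<in>K. FF U"], intro conjI)
    show "(\<Union>U\<in>K. FF U) \<subseteq> polyfun" using FF by blast
    show "\<Union>K = affsp n - zeroset (\<Union>U\<in>K. FF U)"
    proof
      show "\<Union>K \<subseteq> affsp n - zeroset (\<Union>U\<in>K. FF U)"
      proof
        fix x assume "x \<in> \<Union>K"
        then obtain U where U: "U \<in> K" "x \<in> U" by blast
        have e: "U = affsp n - zeroset (FF U)" using FF[OF U(1)] by blast
        have "x \<in> affsp n - zeroset (FF U)" using U(2) e by blast
        then show "x \<in> affsp n - zeroset (\<Union>U\<in>K. FF U)" using U(1) unfolding zeroset_UN by blast
      qed
      show "affsp n - zeroset (\<Union>U\<in>K. FF U) \<subseteq> \<Union>K"
      proof
        fix x assume "x \<in> affsp n - zeroset (\<Union>U\<in>K. FF U)"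
        then obtain U where "U \<in> K" "x \<in> affsp n" "x \<notin> zeroset (FF U)" unfolding zeroset_UN by blast
        have e: "U = affsp n - zeroset (FF U)" using FF[OF \<open>U \<in> K\<close>] by blast
        have "x \<in> U" by (subst e) (use \<open>x \<in> affsp n\<close> \<open>x \<notin> zeroset (FF U)\<close> in blast)
        with \<open>U \<in> K\<close> show "x \<in> \<Union>K" by blast
      qed
    qed
  qed
qed

lemma openin_zariski: "openin (zariski n) U \<longleftrightarrow> (\<exists>F. F \<subseteq> polyfun \<and> U = affsp n - zeroset F)"
  unfolding zariski_def using istop_zariski by simp

lemma zariski_openI: "F \<subseteq> polyfun \<Longrightarrow> openin (zariski n) (affsp n - zeroset F)"
  unfolding openin_zariski by blast

lemma istop_sym: "istopology (\<lambda>U. U \<subseteq> tup_set k r ` tup_dom k r \<and>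
      openin (subtopology (zariski (2 * k * r)) (tup_dom k r)) (tup_dom k r \<inter> tup_set k r -` U))"
  unfolding istopology_def
proof (rule conjI; intro allI impI)
  fix S T
  assume "S \<subseteq> tup_set k r ` tup_dom k r \<and> openin (subtopology (zariski (2 * k * r)) (tup_dom k r)) (tup_dom k r \<inter> tup_set k r -` S)"
    "T \<subseteq> tup_set k r ` tup_dom k r \<and> openin (subtopology (zariski (2 * k * r)) (tup_dom k r)) (tup_dom k r \<inter> tup_set k r -` T)"
  then show "S \<inter> T \<subseteq> tup_set k r ` tup_dom k r \<and> openin (subtopology (zariski (2 * k * r)) (tup_dom k r)) (tup_dom k r \<inter> tup_set k r -` (S \<inter> T))"
  proof -
    have e: "tup_dom k r \<inter> tup_set k r -` (S \<inter> T) = (tup_dom k r \<inter> tup_set k r -` S) \<inter> (tup_dom k r \<inter> tup_set k r -` T)" by blast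
    show ?thesis unfolding e using openin_Int \<open>S \<subseteq> _ \<and> _\<close> \<open>T \<subseteq> _ \<and> _\<close> by blast
  qed
next
  fix K assume K: "\<forall>U\<in>K. U \<subseteq> tup_set k r ` tup_dom k r \<and> openin (subtopology (zariski (2 * k * r)) (tup_dom k r)) (tup_dom k r \<inter> tup_set k r -` U)"
  have "tup_dom k r \<inter> tup_set k r -` \<Union>K = \<Union>((\<lambda>U. tup_dom k r \<inter> tup_set k r -` U) ` K)" by auto
  moreover have "openin (subtopology (zariski (2 * k * r)) (tup_dom k r)) (\<Union>((\<lambda>U. tup_dom k r \<inter> tup_set k r -` U) ` K))"
    using K by (intro openin_Union) auto
  ultimately show "\<Union>K \<subseteq> tup_set k r ` tup_dom k r \<and> openin (subtopology (zariski (2 * k * r)) (tup_dom k r)) (tup_dom k r \<inter> tup_set k r -` \<Union>K)"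
    using K by auto
qed

lemma openin_sym: "openin (sym_zariski k r) U \<longleftrightarrow> U \<subseteq> tup_set k r ` tup_dom k r \<and>
      openin (subtopology (zariski (2 * k * r)) (tup_dom k r)) (tup_dom k r \<inter> tup_set k r -` U)"
  unfolding sym_zariski_def using istop_sym by simp

lemma tup_dom_affsp: "tup_dom k r \<subseteq> affsp (2 * k * r)"
  unfolding tup_dom_def by auto

lemma openin_sym_iff: "openin (sym_zariski k r) U \<longleftrightarrow> U \<subseteq> tup_set k r ` tup_dom k r \<and>
   (\<exists>F. F \<subseteq> polyfun \<and> (\<forall>x\<in>tup_dom k r. tup_set k r x \<in> U \<longleftrightarrow> x \<notin> zeroset F))"
proof -
  have "openin (subtopology (zariski (2 * k * r)) (tup_dom k r)) (tup_dom k r \<inter> tup_set k r -` U)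
     \<longleftrightarrow> (\<exists>F. F \<subseteq> polyfun \<and> (\<forall>x\<in>tup_dom k r. tup_set k r x \<in> U \<longleftrightarrow> x \<notin> zeroset F))"
    (is "?a \<longleftrightarrow> ?b")
  proof
    assume ?a
    then obtain F where F: "F \<subseteq> polyfun" "tup_dom k r \<inter> tup_set k r -` U = (affsp (2 * k * r) - zeroset F) \<inter> tup_dom k r"
      unfolding openin_subtopology openin_zariski by blast
    have "tup_set k r x \<in> U \<longleftrightarrow> x \<notin> zeroset F" if "x \<in> tup_dom k r" for x
    proof -
      have "x \<in> affsp (2 * k * r)" using that tup_dom_affsp by blast
      have "tup_set k r x \<in> U \<longleftrightarrow> x \<in> tup_dom k r \<inter> tup_set k r -` U" using that by simp
      also have "\<dots> \<longleftrightarrow> x \<in> (affsp (2 * k * r) - zeroset F) \<inter> tup_dom k r" using F(2) by simp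
      also have "\<dots> \<longleftrightarrow> x \<notin> zeroset F" using that \<open>x \<in> affsp (2 * k * r)\<close> by simp
      finally show ?thesis .
    qed
    then show ?b using F(1) by blast
  next
    assume ?b
    then obtain F where F: "F \<subseteq> polyfun" "\<forall>x\<in>tup_dom k r. tup_set k r x \<in> U \<longleftrightarrow> x \<notin> zeroset F" by blast
    have "tup_dom k r \<inter> tup_set k r -` U = (affsp (2 * k * r) - zeroset F) \<inter> tup_dom k r"
    proof (rule set_eqI)
      fix x
      show "x \<in> tup_dom k r \<inter> tup_set k r -` U \<longleftrightarrow> x \<in> (affsp (2 * k * r) - zeroset F) \<inter> tup_dom k r"
      proof (cases "x \<in> tup_dom k r")
        case True
        then have "x \<in> affsp (2 * k * r)" using tup_dom_affsp by blast
        then show ?thesis using True F(2) by simp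
      qed simp
    qed
    then show ?a unfolding openin_subtopology using zariski_openI[OF F(1)] by blast
  qed
  then show ?thesis unfolding openin_sym by simp
qed

lemma topspace_sym: "topspace (sym_zariski k r) = tup_set k r ` tup_dom k r"
proof
  show "topspace (sym_zariski k r) \<subseteq> tup_set k r ` tup_dom k r"
    using openin_sym openin_topspace by blast
  have "{\<lambda>x::nat\<Rightarrow>complex. 1} \<subseteq> polyfun" using polyfun.pf_const by blast
  moreover have "x \<notin> zeroset {\<lambda>x::nat\<Rightarrow>complex. 1}" for x
    using zerosetD[of x "{\<lambda>x::nat\<Rightarrow>complex. 1}" "\<lambda>x. 1"] by auto
  ultimately have "openin (sym_zariski k r) (tup_set k r ` tup_dom k r)"
    unfolding openin_sym_iff by blast
  then show "tup_set k r ` tup_dom k r \<subseteq> topspace (sym_zariski k r)"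
    by (simp add: openin_subset)
qed

lemma closedin_sym_iff: "closedin (sym_zariski k r) C \<longleftrightarrow> C \<subseteq> tup_set k r ` tup_dom k r \<and>
   (\<exists>F. F \<subseteq> polyfun \<and> (\<forall>x\<in>tup_dom k r. tup_set k r x \<in> C \<longleftrightarrow> x \<in> zeroset F))"
proof -
  have "closedin (sym_zariski k r) C \<longleftrightarrow> C \<subseteq> tup_set k r ` tup_dom k r \<and> openin (sym_zariski k r) (tup_set k r ` tup_dom k r - C)"
    unfolding closedin_def topspace_sym ..
  also have "\<dots> \<longleftrightarrow> C \<subseteq> tup_set k r ` tup_dom k r \<and>
   (\<exists>F. F \<subseteq> polyfun \<and> (\<forall>x\<in>tup_dom k r. tup_set k r x \<in> tup_set k r ` tup_dom k r - C \<longleftrightarrow> x \<notin> zeroset F))"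
    unfolding openin_sym_iff by blast
  also have "\<dots> \<longleftrightarrow> C \<subseteq> tup_set k r ` tup_dom k r \<and>
   (\<exists>F. F \<subseteq> polyfun \<and> (\<forall>x\<in>tup_dom k r. tup_set k r x \<in> C \<longleftrightarrow> x \<in> zeroset F))"
  proof -
    have "(tup_set k r x \<in> tup_set k r ` tup_dom k r - C \<longleftrightarrow> x \<notin> zeroset F) \<longleftrightarrow> (tup_set k r x \<in> C \<longleftrightarrow> x \<in> zeroset F)"
      if "x \<in> tup_dom k r" for x F using that by auto
    then show ?thesis by meson
  qed
  finally show ?thesis .
qed




definition psi :: "(nat \<Rightarrow> complex) \<Rightarrow> (nat \<Rightarrow> (complex \<times> complex) set) \<Rightarrow> (nat \<Rightarrow> (complex \<times> complex) set)" where
  "psi t p = (\<lambda>i. (\<lambda>(a, b). (a, t i * b)) ` p i)"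

definition Phi :: "nat \<Rightarrow> (nat \<Rightarrow> complex) \<Rightarrow> (nat \<Rightarrow> complex) \<Rightarrow> nat \<Rightarrow> complex" where
  "Phi k t x m = (if odd m then t (((m - 1) div 2) mod k) else 1) * x m"

definition ej :: "nat \<Rightarrow> complex \<Rightarrow> nat \<Rightarrow> complex" where
  "ej j s = (\<lambda>i. if i = j then s else 1)"

lemma img_line: "(\<lambda>(a, b). (a, c * b)) ` line (u, v) = line (u, c * v)"
proof (rule set_eqI)
  fix z
  show "z \<in> (\<lambda>(a, b). (a, c * b)) ` line (u, v) \<longleftrightarrow> z \<in> line (u, c * v)"
  proof
    assume "z \<in> (\<lambda>(a, b). (a, c * b)) ` line (u, v)"
    then obtain c0 where "z = (c0 * u, c * (c0 * v))" unfolding line_def by auto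
    then have "z = (c0 * u, c0 * (c * v))" by (simp add: algebra_simps)
    then show "z \<in> line (u, c * v)" unfolding line_def by auto
  next
    assume "z \<in> line (u, c * v)"
    then obtain c0 where z: "z = (c0 * u, c0 * (c * v))" unfolding line_def by auto
    have "(c0 * u, c0 * v) \<in> line (u, v)" unfolding line_def by auto
    moreover have "z = (\<lambda>(a, b). (a, c * b)) (c0 * u, c0 * v)" using z by (simp add: algebra_simps)
    ultimately show "z \<in> (\<lambda>(a, b). (a, c * b)) ` line (u, v)" by blast
  qed
qed

lemma psi_line: "p i = line (u, v) \<Longrightarrow> psi t p i = line (u, t i * v)"
  unfolding psi_def using img_line by simp

lemma psi_comp: "psi t (psi s p) = psi (\<lambda>i. t i * s i) p"
  unfolding psi_def by (auto simp: image_image fun_eq_iff mult.assoc split_beta)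

lemma psi_one: "psi (\<lambda>i. 1) p = p"
  unfolding psi_def by (simp add: split_beta)

lemma psi_inv: "\<forall>i. t i \<noteq> 0 \<Longrightarrow> psi (\<lambda>i. 1 / t i) (psi t p) = p"
  by (simp add: psi_comp psi_one)

lemma psi_inj: "\<forall>i. t i \<noteq> 0 \<Longrightarrow> inj (psi t)"
  by (metis injI psi_inv)

lemma ej_nz: "s \<noteq> 0 \<Longrightarrow> \<forall>i. ej j s i \<noteq> 0"
  unfolding ej_def by simp

lemma psi_ej1: "psi (ej j 1) = id"
  unfolding ej_def by (simp add: fun_eq_iff psi_one[unfolded id_def] cong: if_cong)

lemma tup_point_Phi: "tup_point k (Phi k t x) j = psi t (tup_point k x j)"
proof (rule ext)
  fix i
  show "tup_point k (Phi k t x) j i = psi t (tup_point k x j) i"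
  proof (cases "i < k")
    case True
    have "Phi k t x (2 * (k * j + i)) = x (2 * (k * j + i))" unfolding Phi_def by simp
    moreover have "Phi k t x (2 * (k * j + i) + 1) = t i * x (2 * (k * j + i) + 1)"
      unfolding Phi_def using True by simp
    moreover have "tup_point k x j i = line (x (2 * (k * j + i)), x (2 * (k * j + i) + 1))"
      unfolding tup_point_def using True by simp
    ultimately show ?thesis unfolding tup_point_def using True psi_line by simp
  next
    case False
    then show ?thesis unfolding tup_point_def psi_def by simp
  qed
qed

lemma tup_set_Phi: "tup_set k r (Phi k t x) = psi t ` tup_set k r x"
  unfolding tup_set_def by (simp add: image_image tup_point_Phi)

lemma Phi_affsp: "x \<in> affsp n \<Longrightarrow> Phi k t x \<in> affsp n"
  unfolding affsp_def Phi_def by simp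

lemma Phi_dom:
  assumes "\<forall>i. t i \<noteq> 0" "x \<in> tup_dom k r"
  shows "Phi k t x \<in> tup_dom k r"
proof -
  have "x \<in> affsp (2 * k * r)" using assms(2) unfolding tup_dom_def by blast
  then have a: "Phi k t x \<in> affsp (2 * k * r)" by (rule Phi_affsp)
  have b: "(Phi k t x (2 * (k * j + i)), Phi k t x (2 * (k * j + i) + 1)) \<noteq> 0" if "j < r" "i < k" for j i
  proof -
    have "(x (2 * (k * j + i)), x (2 * (k * j + i) + 1)) \<noteq> 0" using assms(2) that unfolding tup_dom_def by blast
    moreover have "Phi k t x (2 * (k * j + i)) = x (2 * (k * j + i))" unfolding Phi_def by simp
    moreover have "Phi k t x (2 * (k * j + i) + 1) = t i * x (2 * (k * j + i) + 1)"
      unfolding Phi_def using that by simp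
    ultimately show ?thesis using assms(1) by (auto simp: zero_prod_def)
  qed
  have c: "tup_point k (Phi k t x) j \<noteq> tup_point k (Phi k t x) j'" if "j < r" "j' < r" "j \<noteq> j'" for j j'
  proof -
    have "tup_point k x j \<noteq> tup_point k x j'" using assms(2) that unfolding tup_dom_def by blast
    then show ?thesis unfolding tup_point_Phi using psi_inj[OF assms(1)] by (metis injD)
  qed
  show ?thesis unfolding tup_dom_def using a b c by blast
qed

lemma polyfun_comp_scale: "f \<in> polyfun \<Longrightarrow> (\<lambda>x. f (\<lambda>m. c m * x m)) \<in> polyfun"
proof (induction rule: polyfun.induct)
  case (pf_const c) then show ?case by (rule polyfun.pf_const)
next
  case (pf_var i)
  have "(\<lambda>x. c i) \<in> polyfun" "(\<lambda>x. x i) \<in> polyfun" by (rule polyfun.intros)+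
  then show ?case using polyfun.pf_mult by fastforce
next
  case (pf_add f g) then show ?case using polyfun.pf_add by fastforce
next
  case (pf_mult f g) then show ?case using polyfun.pf_mult by fastforce
qed

lemma polyfun_poly: "f \<in> polyfun \<Longrightarrow> \<exists>p. \<forall>s. f (\<lambda>m. a m + s * b m) = poly p s"
proof (induction rule: polyfun.induct)
  case (pf_const c) then show ?case by (intro exI[of _ "[:c:]"]) simp
next
  case (pf_var i) then show ?case by (intro exI[of _ "[:a i, b i:]"]) (simp add: algebra_simps)
next
  case (pf_add f g)
  then obtain p q where "\<forall>s. f (\<lambda>m. a m + s * b m) = poly p s" "\<forall>s. g (\<lambda>m. a m + s * b m) = poly q s" by blast
  then show ?case by (intro exI[of _ "p + q"]) simp
next
  case (pf_mult f g)
  then obtain p q where "\<forall>s. f (\<lambda>m. a m + s * b m) = poly p s" "\<forall>s. g (\<lambda>m. a m + s * b m) = poly q s" by blast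
  then show ?case by (intro exI[of _ "p * q"]) simp
qed

lemma zeroset_comp: "x \<in> zeroset ((\<lambda>f. \<lambda>x. f (g x)) ` F) \<longleftrightarrow> g x \<in> zeroset F"
proof
  assume a: "x \<in> zeroset ((\<lambda>f. \<lambda>x. f (g x)) ` F)"
  show "g x \<in> zeroset F"
  proof (rule zerosetI)
    fix f assume "f \<in> F"
    then have "(\<lambda>x. f (g x)) \<in> (\<lambda>f. \<lambda>x. f (g x)) ` F" by blast
    from zerosetD[OF a this] show "f (g x) = 0" .
  qed
next
  assume a: "g x \<in> zeroset F"
  show "x \<in> zeroset ((\<lambda>f. \<lambda>x. f (g x)) ` F)"
  proof (rule zerosetI)
    fix h assume "h \<in> (\<lambda>f. \<lambda>x. f (g x)) ` F"
    then obtain f where "f \<in> F" "h = (\<lambda>x. f (g x))" by blast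
    then show "h x = 0" using zerosetD[OF a] by simp
  qed
qed

lemma Phi_scale: "Phi k t = (\<lambda>x. \<lambda>m. (if odd m then t (((m - 1) div 2) mod k) else 1) * x m)"
  unfolding Phi_def by (simp add: fun_eq_iff)

lemma cont_psi:
  assumes "\<forall>i. t i \<noteq> 0"
  shows "continuous_map (sym_zariski k r) (sym_zariski k r) (image (psi t))"
  unfolding continuous_map
proof (intro conjI allI impI)
  show "image (psi t) ` topspace (sym_zariski k r) \<subseteq> topspace (sym_zariski k r)"
  proof
    fix B assume "B \<in> image (psi t) ` topspace (sym_zariski k r)"
    then obtain x where x: "x \<in> tup_dom k r" "B = psi t ` tup_set k r x" unfolding topspace_sym by blast
    then have "B = tup_set k r (Phi k t x)" by (simp add: tup_set_Phi)
    then show "B \<in> topspace (sym_zariski k r)" unfolding topspace_sym using Phi_dom[OF assms x(1)] by blast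
  qed
next
  fix U assume "openin (sym_zariski k r) U"
  then obtain F where F: "F \<subseteq> polyfun" "\<forall>x\<in>tup_dom k r. tup_set k r x \<in> U \<longleftrightarrow> x \<notin> zeroset F"
    unfolding openin_sym_iff by blast
  define F' where "F' = (\<lambda>f. \<lambda>x. f (Phi k t x)) ` F"
  have F'p: "F' \<subseteq> polyfun"
  proof
    fix h assume "h \<in> F'"
    then obtain f where f: "f \<in> F" "h = (\<lambda>x. f (Phi k t x))" unfolding F'_def by blast
    have "(\<lambda>x. f (\<lambda>m. (if odd m then t (((m - 1) div 2) mod k) else 1) * x m)) \<in> polyfun"
      using f(1) F(1) by (intro polyfun_comp_scale) blast
    then show "h \<in> polyfun" unfolding f(2) Phi_scale .
  qed
  have "tup_set k r x \<in> {B \<in> topspace (sym_zariski k r). psi t ` B \<in> U} \<longleftrightarrow> x \<notin> zeroset F'"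
    if "x \<in> tup_dom k r" for x
  proof -
    have "tup_set k r x \<in> {B \<in> topspace (sym_zariski k r). psi t ` B \<in> U} \<longleftrightarrow> tup_set k r (Phi k t x) \<in> U"
      using that by (simp add: topspace_sym tup_set_Phi)
    also have "\<dots> \<longleftrightarrow> Phi k t x \<notin> zeroset F" using F(2) Phi_dom[OF assms that] by blast
    also have "\<dots> \<longleftrightarrow> x \<notin> zeroset F'" unfolding F'_def zeroset_comp ..
    finally show ?thesis .
  qed
  then show "openin (sym_zariski k r) {B \<in> topspace (sym_zariski k r). psi t ` B \<in> U}"
    unfolding openin_sym_iff using F'p by (auto simp: topspace_sym)
qed

lemma dichotomy:
  assumes "closedin (sym_zariski k r) C" "x \<in> tup_dom k r"
  shows "{s. s \<noteq> 0 \<and> psi (ej j s) ` tup_set k r x \<in> C} = - {0} \<or> finite {s. s \<noteq> 0 \<and> psi (ej j s) ` tup_set k r x \<in> C}"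
proof -
  obtain F where F: "F \<subseteq> polyfun" "\<forall>x\<in>tup_dom k r. tup_set k r x \<in> C \<longleftrightarrow> x \<in> zeroset F"
    using assms(1) unfolding closedin_sym_iff by blast
  define sel where "sel m \<longleftrightarrow> odd m \<and> ((m - 1) div 2) mod k = j" for m
  define a where "a m = (if sel m then 0 else x m)" for m
  define b where "b m = (if sel m then x m else 0)" for m
  have Pe: "Phi k (ej j s) x = (\<lambda>m. a m + s * b m)" for s
    unfolding Phi_def ej_def a_def b_def sel_def by (auto simp: fun_eq_iff)
  have mem: "psi (ej j s) ` tup_set k r x \<in> C \<longleftrightarrow> (\<forall>f\<in>F. f (\<lambda>m. a m + s * b m) = 0)" if "s \<noteq> 0" for s
  proof -
    have "psi (ej j s) ` tup_set k r x \<in> C \<longleftrightarrow> Phi k (ej j s) x \<in> zeroset F"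
      using F(2) Phi_dom[OF ej_nz[OF that] assms(2)] by (simp add: tup_set_Phi[symmetric])
    also have "\<dots> \<longleftrightarrow> (\<forall>f\<in>F. f (\<lambda>m. a m + s * b m) = 0)" unfolding zeroset_def Pe by simp
    finally show ?thesis .
  qed
  show ?thesis
  proof (cases "\<exists>f\<in>F. \<exists>s. f (\<lambda>m. a m + s * b m) \<noteq> 0")
    case True
    then obtain f s0 where f: "f \<in> F" "f (\<lambda>m. a m + s0 * b m) \<noteq> 0" by blast
    obtain p where p: "\<forall>s. f (\<lambda>m. a m + s * b m) = poly p s" using polyfun_poly F(1) f(1) by blast
    have "p \<noteq> 0" using p f(2) by auto
    then have "finite {s. poly p s = 0}" by (rule poly_roots_finite)
    moreover have "{s. s \<noteq> 0 \<and> psi (ej j s) ` tup_set k r x \<in> C} \<subseteq> {s. poly p s = 0}"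
    proof
      fix s assume "s \<in> {s. s \<noteq> 0 \<and> psi (ej j s) ` tup_set k r x \<in> C}"
      then have "f (\<lambda>m. a m + s * b m) = 0" using mem f(1) by blast
      then show "s \<in> {s. poly p s = 0}" using p by simp
    qed
    ultimately show ?thesis using finite_subset by blast
  next
    case False
    then show ?thesis using mem by auto
  qed
qed




lemma P1kD1: "p \<in> P1k k \<Longrightarrow> i < k \<Longrightarrow> \<exists>v. v \<noteq> 0 \<and> p i = line v"
  by (simp add: P1k_def)

lemma P1kD2: "p \<in> P1k k \<Longrightarrow> k \<le> i \<Longrightarrow> p i = {}"
  by (simp add: P1k_def)

lemma in_spanE:
  assumes "in_span d k q A"
  obtains c v where "finite A" "\<forall>p\<in>A. \<forall>i<k. v p i \<noteq> 0 \<and> p i = line (v p i)"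
    "q = (\<lambda>e. \<Sum>p\<in>A. c p * nuv d k (v p) e)"
proof -
  have "finite A \<and> (\<exists>c v. (\<forall>p\<in>A. \<forall>i<k. v p i \<noteq> 0 \<and> p i = line (v p i)) \<and>
            q = (\<lambda>e. \<Sum>p\<in>A. c p * nuv d k (v p) e))" using assms unfolding in_span_def .
  then show thesis using that by (elim conjE exE) blast
qed

lemma decompD:
  assumes "A \<in> decomp_set d k q"
  shows "A \<subseteq> P1k k" "card A = SV_rank d k q" "in_span d k q A"
  using assms unfolding decomp_set_def by simp_all

lemma coll_eq: "{s \<in> P. Q s} = P \<Longrightarrow> \<forall>s\<in>P. Q s"
  by blast

lemma union_irred:
  fixes X :: "'a topology" and g :: "complex \<Rightarrow> 'a \<Rightarrow> 'a"
  assumes S: "irreducible_in X S" and P: "infinite P"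
    and cont: "\<And>s. s \<in> P \<Longrightarrow> continuous_map X X (g s)"
    and dich: "\<And>A C. A \<in> S \<Longrightarrow> closedin X C \<Longrightarrow> {s \<in> P. g s A \<in> C} = P \<or> finite {s \<in> P. g s A \<in> C}"
  shows "irreducible_in X (\<Union>s\<in>P. g s ` S)"
proof -
  have Sne: "S \<noteq> {}" and Stop: "S \<subseteq> topspace X"
    and Sirr: "\<And>C1 C2. closedin X C1 \<Longrightarrow> closedin X C2 \<Longrightarrow> S \<subseteq> C1 \<union> C2 \<Longrightarrow> S \<subseteq> C1 \<or> S \<subseteq> C2"
    using S unfolding irreducible_in_def by blast+
  have Pne: "P \<noteq> {}" using P by auto
  have ne: "(\<Union>s\<in>P. g s ` S) \<noteq> {}" using Sne Pne by blast
  have sub: "(\<Union>s\<in>P. g s ` S) \<subseteq> topspace X"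
  proof -
    have "g s ` S \<subseteq> topspace X" if "s \<in> P" for s
      using continuous_map_image_subset_topspace[OF cont[OF that]] Stop by blast
    then show ?thesis by blast
  qed
  have main: "(\<Union>s\<in>P. g s ` S) \<subseteq> C1 \<or> (\<Union>s\<in>P. g s ` S) \<subseteq> C2"
    if C: "closedin X C1" "closedin X C2" "(\<Union>s\<in>P. g s ` S) \<subseteq> C1 \<union> C2" for C1 C2
  proof -
    define K where "K C = {A \<in> topspace X. \<forall>s\<in>P. g s A \<in> C}" for C
    have Kc: "closedin X (K C)" if "closedin X C" for C
    proof -
      have "K C = \<Inter>((\<lambda>s. {A \<in> topspace X. g s A \<in> C}) ` P)"
      proof (rule set_eqI)
        fix A
        obtain s0 where "s0 \<in> P" using Pne by blast
        show "A \<in> K C \<longleftrightarrow> A \<in> \<Inter>((\<lambda>s. {A \<in> topspace X. g s A \<in> C}) ` P)"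
          unfolding K_def using \<open>s0 \<in> P\<close> by blast
      qed
      moreover have "closedin X (\<Inter>((\<lambda>s. {A \<in> topspace X. g s A \<in> C}) ` P))"
      proof (rule closedin_Inter)
        show "(\<lambda>s. {A \<in> topspace X. g s A \<in> C}) ` P \<noteq> {}" using Pne by blast
        fix Q assume "Q \<in> (\<lambda>s. {A \<in> topspace X. g s A \<in> C}) ` P"
        then obtain s where "s \<in> P" "Q = {A \<in> topspace X. g s A \<in> C}" by blast
        then show "closedin X Q" using closedin_continuous_map_preimage[OF cont that] by simp
      qed
      ultimately show ?thesis by simp
    qed
    have "S \<subseteq> K C1 \<union> K C2"
    proof
      fix A assume A: "A \<in> S"
      have cov: "P \<subseteq> {s \<in> P. g s A \<in> C1} \<union> {s \<in> P. g s A \<in> C2}"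
      proof
        fix s assume "s \<in> P"
        then have "g s A \<in> (\<Union>s\<in>P. g s ` S)" using A by blast
        then have "g s A \<in> C1 \<or> g s A \<in> C2" using C(3) by blast
        then show "s \<in> {s \<in> P. g s A \<in> C1} \<union> {s \<in> P. g s A \<in> C2}" using \<open>s \<in> P\<close> by blast
      qed
      have "{s \<in> P. g s A \<in> C1} = P \<or> {s \<in> P. g s A \<in> C2} = P"
      proof (rule ccontr)
        assume nn: "\<not> ?thesis"
        have f1: "finite {s \<in> P. g s A \<in> C1}" using dich[OF A C(1)] nn by blast
        have f2: "finite {s \<in> P. g s A \<in> C2}" using dich[OF A C(2)] nn by blast
        have "finite ({s \<in> P. g s A \<in> C1} \<union> {s \<in> P. g s A \<in> C2})" using f1 f2 by (rule finite_UnI)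
        then have "finite P" using cov by (rule finite_subset[rotated])
        then show False using P by simp
      qed
      then have "(\<forall>s\<in>P. g s A \<in> C1) \<or> (\<forall>s\<in>P. g s A \<in> C2)"
      proof
        assume "{s \<in> P. g s A \<in> C1} = P" then show ?thesis using coll_eq[of P] by blast
      next
        assume "{s \<in> P. g s A \<in> C2} = P" then show ?thesis using coll_eq[of P] by blast
      qed
      moreover have "A \<in> topspace X" using A Stop by blast
      ultimately show "A \<in> K C1 \<union> K C2" unfolding K_def by blast
    qed
    then have "S \<subseteq> K C1 \<or> S \<subseteq> K C2" by (rule Sirr[OF Kc[OF C(1)] Kc[OF C(2)]])
    moreover have "(\<Union>s\<in>P. g s ` S) \<subseteq> C" if "S \<subseteq> K C" for C
    proof
      fix B assume "B \<in> (\<Union>s\<in>P. g s ` S)"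
      then obtain s A where "s \<in> P" "A \<in> S" "B = g s A" by blast
      then show "B \<in> C" using that unfolding K_def by blast
    qed
    ultimately show ?thesis by blast
  qed
  show ?thesis unfolding irreducible_in_def using ne sub main by (intro conjI allI impI) auto
qed

lemma closure_irred:
  assumes "irreducible_in X S" "S \<subseteq> Z" "Z \<subseteq> X closure_of S"
  shows "irreducible_in X Z"
proof -
  have Sne: "S \<noteq> {}" and Stop: "S \<subseteq> topspace X"
    and Sirr: "\<And>C1 C2. closedin X C1 \<Longrightarrow> closedin X C2 \<Longrightarrow> S \<subseteq> C1 \<union> C2 \<Longrightarrow> S \<subseteq> C1 \<or> S \<subseteq> C2"
    using assms(1) unfolding irreducible_in_def by blast+
  have "Z \<subseteq> topspace X" by (rule order_trans[OF assms(3) closure_of_subset_topspace])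
  moreover have "Z \<subseteq> C1 \<or> Z \<subseteq> C2" if "closedin X C1" "closedin X C2" "Z \<subseteq> C1 \<union> C2" for C1 C2
  proof -
    have "S \<subseteq> C1 \<union> C2" using that(3) assms(2) by (rule order_trans[rotated])
    then have "S \<subseteq> C1 \<or> S \<subseteq> C2" by (rule Sirr[OF that(1,2)])
    then have "X closure_of S \<subseteq> C1 \<or> X closure_of S \<subseteq> C2"
      using closure_of_minimal[of S C1 X] closure_of_minimal[of S C2 X] that(1,2) by blast
    then show ?thesis using assms(3) by blast
  qed
  moreover have "Z \<noteq> {}" using Sne assms(2) by blast
  ultimately show ?thesis unfolding irreducible_in_def by (intro conjI allI impI) auto
qed

lemma nuv_scale: "nuv d k (\<lambda>i. (fst (w i), t i * snd (w i))) e = (\<Prod>i<k. t i ^ e i) * nuv d k w e"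
proof (cases "mindex d k e")
  case True
  have "(\<Prod>i<k. of_nat (d i choose e i) * fst (w i) ^ (d i - e i) * (t i * snd (w i)) ^ e i)
      = (\<Prod>i<k. t i ^ e i * (of_nat (d i choose e i) * fst (w i) ^ (d i - e i) * snd (w i) ^ e i))"
  proof (rule prod.cong)
    fix i
    show "of_nat (d i choose e i) * fst (w i) ^ (d i - e i) * (t i * snd (w i)) ^ e i =
      t i ^ e i * (of_nat (d i choose e i) * fst (w i) ^ (d i - e i) * snd (w i) ^ e i)"
      by (simp only: power_mult_distrib mult_ac)
  qed simp
  also have "\<dots> = (\<Prod>i<k. t i ^ e i) * (\<Prod>i<k. of_nat (d i choose e i) * fst (w i) ^ (d i - e i) * snd (w i) ^ e i)"
    by (rule prod.distrib)
  finally show ?thesis unfolding nuv_def using True by simp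
qed (simp add: nuv_def)

lemma psi_P1k: "\<forall>i. t i \<noteq> 0 \<Longrightarrow> p \<in> P1k k \<Longrightarrow> psi t p \<in> P1k k"
proof -
  assume t: "\<forall>i. t i \<noteq> 0" and p: "p \<in> P1k k"
  have "\<exists>v. v \<noteq> 0 \<and> psi t p i = line v" if ik: "i < k" for i
  proof -
    obtain v where v: "v \<noteq> 0" "p i = line v" using P1kD1[OF p ik] by blast
    have "psi t p i = line (fst v, t i * snd v)" using psi_line[of p i "fst v" "snd v"] v(2) by simp
    moreover have "(fst v, t i * snd v) \<noteq> 0"
    proof (cases "fst v = 0")
      case True
      then have "snd v \<noteq> 0" using v(1) by (cases v) (simp add: zero_prod_def)
      then show ?thesis using t by (simp add: zero_prod_def)
    qed (simp add: zero_prod_def)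
    ultimately show ?thesis by blast
  qed
  moreover have "psi t p i = {}" if "i \<ge> k" for i
    using P1kD2[OF p that] unfolding psi_def by simp
  ultimately show ?thesis unfolding P1k_def by blast
qed




lemma decomp_inv:
  assumes t: "\<forall>i. t i \<noteq> 0" and A: "A \<in> decomp_set d k (Wtensor d k)"
  shows "psi t ` A \<in> decomp_set d k (Wtensor d k)"
proof -
  have A1: "A \<subseteq> P1k k" and A2: "card A = SV_rank d k (Wtensor d k)" and A3: "in_span d k (Wtensor d k) A"
    using decompD[OF A] by - assumption+
  have inj: "inj (psi t)" using psi_inj[OF t] .
  obtain c v where fin: "finite A" and cv: "\<forall>p\<in>A. \<forall>i<k. v p i \<noteq> 0 \<and> p i = line (v p i)"
    "Wtensor d k = (\<lambda>e. \<Sum>p\<in>A. c p * nuv d k (v p) e)"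
    by (rule in_spanE[OF A3])
  define ti where "ti = (\<lambda>i. 1 / t i)"
  define Pt where "Pt = (\<Prod>i<k. t i)"
  have Pt0: "Pt \<noteq> 0" unfolding Pt_def using t by simp
  define w where "w p' = (\<lambda>i. (fst (v (psi ti p') i), t i * snd (v (psi ti p') i)))" for p'
  define c' where "c' p' = c (psi ti p') / Pt" for p'
  have psiback: "psi ti (psi t p) = p" for p unfolding ti_def using psi_inv[OF t] .
  have c1: "\<forall>p'\<in>psi t ` A. \<forall>i<k. w p' i \<noteq> 0 \<and> p' i = line (w p' i)"
  proof (intro ballI allI impI)
    fix p' i assume p': "p' \<in> psi t ` A" and i: "i < k"
    then obtain p where p: "p \<in> A" "p' = psi t p" by blast
    have wp: "w p' i = (fst (v p i), t i * snd (v p i))" unfolding w_def p(2) psiback by simp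
    have vp: "v p i \<noteq> 0" "p i = line (v p i)" using cv(1) p(1) i by blast+
    have "p' i = line (fst (v p i), t i * snd (v p i))"
      unfolding p(2) using psi_line[of p i "fst (v p i)" "snd (v p i)"] vp(2) by simp
    moreover have "(fst (v p i), t i * snd (v p i)) \<noteq> 0"
      using vp(1) t by (cases "v p i") (auto simp: zero_prod_def)
    ultimately show "w p' i \<noteq> 0 \<and> p' i = line (w p' i)" unfolding wp by simp
  qed
  have c2: "Wtensor d k = (\<lambda>e. \<Sum>p'\<in>psi t ` A. c' p' * nuv d k (w p') e)"
  proof (rule ext)
    fix e
    have "(\<Sum>p'\<in>psi t ` A. c' p' * nuv d k (w p') e) = (\<Sum>p\<in>A. c' (psi t p) * nuv d k (w (psi t p)) e)"
      by (rule sum.reindex[unfolded comp_def]) (use inj in \<open>simp add: inj_on_def inj_def\<close>)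
    also have "\<dots> = (\<Sum>p\<in>A. ((\<Prod>i<k. t i ^ e i) / Pt) * (c p * nuv d k (v p) e))"
    proof (rule sum.cong)
      fix p assume "p \<in> A"
      have "w (psi t p) = (\<lambda>i. (fst (v p i), t i * snd (v p i)))" unfolding w_def psiback ..
      then show "c' (psi t p) * nuv d k (w (psi t p)) e = ((\<Prod>i<k. t i ^ e i) / Pt) * (c p * nuv d k (v p) e)"
        unfolding c'_def psiback using nuv_scale[of d k "v p" t e] by simp
    qed simp
    also have "\<dots> = ((\<Prod>i<k. t i ^ e i) / Pt) * Wtensor d k e"
      by (subst cv(2)) (simp add: sum_distrib_left)
    also have "\<dots> = Wtensor d k e"
    proof (cases "mindex d k e \<and> (\<forall>i<k. e i = 1)")
      case True
      then have "(\<Prod>i<k. t i ^ e i) = Pt" unfolding Pt_def by (intro prod.cong) auto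
      then show ?thesis using Pt0 by simp
    next
      case False
      then have "Wtensor d k e = 0" unfolding Wtensor_def by simp
      then show ?thesis by simp
    qed
    finally show "Wtensor d k e = (\<Sum>p'\<in>psi t ` A. c' p' * nuv d k (w p') e)" ..
  qed
  have "in_span d k (Wtensor d k) (psi t ` A)"
    unfolding in_span_def using fin c1 c2 by (intro conjI finite_imageI exI[of _ c'] exI[of _ w]) simp_all
  moreover have "psi t ` A \<subseteq> P1k k" using A1 psi_P1k[OF t] by blast
  moreover have "card (psi t ` A) = card A" using inj by (simp add: card_image inj_on_def inj_def)
  ultimately show ?thesis unfolding decomp_set_def using A2 by simp
qed




lemma line_memI: "z = (c * u, c * v) \<Longrightarrow> z \<in> line (u, v)"
  unfolding line_def by auto

lemma line_scale: "c \<noteq> 0 \<Longrightarrow> line (c * u, c * v) = line (u, v)"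
proof (rule set_eqI)
  fix z assume c: "c \<noteq> 0"
  show "z \<in> line (c * u, c * v) \<longleftrightarrow> z \<in> line (u, v)"
  proof
    assume "z \<in> line (c * u, c * v)"
    then obtain c0 where "z = (c0 * (c * u), c0 * (c * v))" unfolding line_def by auto
    then have "z = ((c0 * c) * u, (c0 * c) * v)" by (simp add: mult.assoc)
    then show "z \<in> line (u, v)" by (rule line_memI)
  next
    assume "z \<in> line (u, v)"
    then obtain c0 where "z = (c0 * u, c0 * v)" unfolding line_def by auto
    then have "z = ((c0 / c) * (c * u), (c0 / c) * (c * v))" using c by simp
    then show "z \<in> line (c * u, c * v)" by (rule line_memI)
  qed
qed

lemma line_eq_det: "line (u, v) = line (a, b) \<Longrightarrow> u * b = v * a"
proof -
  assume e: "line (u, v) = line (a, b)"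
  have "(u, v) \<in> line (u, v)" unfolding line_def by (auto intro!: exI[of _ 1])
  then have "(u, v) \<in> line (a, b)" using e by simp
  then obtain c where "u = c * a" "v = c * b" unfolding line_def by auto
  then show ?thesis by simp
qed

lemma det_line_eq:
  assumes "(u, v) \<noteq> 0" "a \<noteq> 0" "u * b = v * a"
  shows "line (u, v) = line (a, b)"
proof -
  have u: "u \<noteq> 0"
  proof
    assume "u = 0"
    then have "v * a = 0" using assms(3) by simp
    then have "v = 0" using assms(2) by simp
    then show False using assms(1) \<open>u = 0\<close> by (simp add: zero_prod_def)
  qed
  have "v = (u / a) * b" using assms(2,3) by (simp add: field_simps)
  moreover have "u = (u / a) * a" using assms(2) by simp
  ultimately have "line (u, v) = line ((u / a) * a, (u / a) * b)" by simp
  also have "\<dots> = line (a, b)" using u assms(2) by (intro line_scale) simp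
  finally show ?thesis .
qed

lemma polyfun_prod: "(\<And>m::nat. m < (n::nat) \<Longrightarrow> f m \<in> polyfun) \<Longrightarrow> (\<lambda>x. \<Prod>m<n. f m x) \<in> polyfun"
proof (induction n)
  case 0 then show ?case by (simp add: polyfun.pf_const)
next
  case (Suc n)
  then have "(\<lambda>x. \<Prod>m<n. f m x) \<in> polyfun" "f n \<in> polyfun" by simp_all
  then have "(\<lambda>x. (\<Prod>m<n. f m x) * f n x) \<in> polyfun" by (rule polyfun.pf_mult)
  then show ?case by (simp add: mult.commute)
qed

lemma polyfun_det: "(\<lambda>x. x i * b - x j * a) \<in> polyfun"
proof -
  have "(\<lambda>x. x i * b) \<in> polyfun" using polyfun.pf_mult[OF polyfun.pf_var polyfun.pf_const] .
  moreover have "(\<lambda>x. (- a) * x j) \<in> polyfun" using polyfun.pf_mult[OF polyfun.pf_const polyfun.pf_var] .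
  ultimately have "(\<lambda>x. x i * b + (- a) * x j) \<in> polyfun" by (rule polyfun.pf_add)
  then show ?thesis by (simp add: algebra_simps)
qed

lemma sing_irred: "A \<in> topspace X \<Longrightarrow> irreducible_in X {A}"
  unfolding irreducible_in_def by auto

lemma tup_point_j: "j < k \<Longrightarrow> tup_point k x m j = line (x (2 * (k * m + j)), x (2 * (k * m + j) + 1))"
  unfolding tup_point_def by simp

lemma tup_domD: "x \<in> tup_dom k r \<Longrightarrow> m < r \<Longrightarrow> j < k \<Longrightarrow> (x (2 * (k * m + j)), x (2 * (k * m + j) + 1)) \<noteq> 0"
  unfolding tup_dom_def by simp

lemma zeroset_single: "x \<in> zeroset {f} \<longleftrightarrow> f x = 0"
  unfolding zeroset_def by simp

lemma K_closed:
  assumes j: "j < k" and ab: "a \<noteq> 0" "b \<noteq> 0"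
  shows "closedin (sym_zariski k r) {B \<in> topspace (sym_zariski k r). \<exists>p\<in>B. p j = line (a, b)}"
proof -
  define f where "f = (\<lambda>x::nat \<Rightarrow> complex. \<Prod>m<r. (x (2 * (k * m + j)) * b - x (2 * (k * m + j) + 1) * a))"
  have fp: "f \<in> polyfun" unfolding f_def by (rule polyfun_prod) (rule polyfun_det)
  have "tup_set k r x \<in> {B \<in> topspace (sym_zariski k r). \<exists>p\<in>B. p j = line (a, b)} \<longleftrightarrow> x \<in> zeroset {f}"
    if x: "x \<in> tup_dom k r" for x
  proof -
    have "tup_set k r x \<in> {B \<in> topspace (sym_zariski k r). \<exists>p\<in>B. p j = line (a, b)}
       \<longleftrightarrow> (\<exists>m<r. tup_point k x m j = line (a, b))"
      using x unfolding topspace_sym tup_set_def by auto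
    also have "\<dots> \<longleftrightarrow> (\<exists>m<r. x (2 * (k * m + j)) * b - x (2 * (k * m + j) + 1) * a = 0)"
    proof (intro ex_cong1 conj_cong refl)
      fix m assume m: "m < r"
      show "tup_point k x m j = line (a, b) \<longleftrightarrow> x (2 * (k * m + j)) * b - x (2 * (k * m + j) + 1) * a = 0"
        unfolding tup_point_j[OF j]
        using line_eq_det[of "x (2 * (k * m + j))" "x (2 * (k * m + j) + 1)" a b]
          det_line_eq[OF tup_domD[OF x m j] ab(1), of b] by auto
    qed
    also have "\<dots> \<longleftrightarrow> f x = 0" unfolding f_def by (auto simp: prod_zero_iff)
    also have "\<dots> \<longleftrightarrow> x \<in> zeroset {f}" by (simp add: zeroset_single)
    finally show ?thesis .
  qed
  moreover have "{B \<in> topspace (sym_zariski k r). \<exists>p\<in>B. p j = line (a, b)} \<subseteq> tup_set k r ` tup_dom k r"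
    unfolding topspace_sym by (rule subsetI) simp
  ultimately show ?thesis unfolding closedin_sym_iff using fp by (intro conjI exI[of _ "{f}"]) auto
qed

lemma infinite_nz: "infinite (- {0::complex})"
proof
  assume "finite (- {0::complex})"
  then have "finite (insert 0 (- {0::complex}))" by simp
  moreover have "insert 0 (- {0::complex}) = UNIV" by auto
  ultimately have "finite (UNIV :: complex set)" by metis
  then show False using infinite_UNIV_char_0[where 'a=complex] by blast
qed

fun orb :: "(nat \<Rightarrow> (complex \<times> complex) set) set \<Rightarrow> nat \<Rightarrow> (nat \<Rightarrow> (complex \<times> complex) set) set set" where
  "orb A 0 = {A}"
| "orb A (Suc j) = (\<Union>s\<in>- {0}. image (psi (ej j s)) ` orb A j)"

lemma orb_dich:
  assumes "A \<in> topspace (sym_zariski k r)" "closedin (sym_zariski k r) C"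
  shows "{s \<in> - {0}. image (psi (ej j s)) A \<in> C} = - {0} \<or> finite {s \<in> - {0}. image (psi (ej j s)) A \<in> C}"
proof -
  obtain x where x: "x \<in> tup_dom k r" "A = tup_set k r x" using assms(1) unfolding topspace_sym by blast
  have e: "{s \<in> - {0}. image (psi (ej j s)) A \<in> C} = {s. s \<noteq> 0 \<and> psi (ej j s) ` tup_set k r x \<in> C}"
    using x(2) by auto
  show ?thesis unfolding e using dichotomy[OF assms(2) x(1)] .
qed

lemma union_irred_ej:
  assumes "irreducible_in (sym_zariski k r) S"
  shows "irreducible_in (sym_zariski k r) (\<Union>s\<in>- {0}. image (psi (ej j s)) ` S)"
proof (rule union_irred[OF assms infinite_nz])
  fix s :: complex assume "s \<in> - {0}"
  then show "continuous_map (sym_zariski k r) (sym_zariski k r) (image (psi (ej j s)))"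
    by (intro cont_psi ej_nz) simp
next
  fix A C assume "A \<in> S" "closedin (sym_zariski k r) C"
  moreover have "S \<subseteq> topspace (sym_zariski k r)" using assms unfolding irreducible_in_def by simp
  ultimately show "{s \<in> - {0}. image (psi (ej j s)) A \<in> C} = - {0} \<or> finite {s \<in> - {0}. image (psi (ej j s)) A \<in> C}"
    using orb_dich by blast
qed




lemma compD:
  assumes "irreducible_component X D G"
  shows "G \<subseteq> D" "irreducible_in X G" "\<And>G'. G \<subseteq> G' \<Longrightarrow> G' \<subseteq> D \<Longrightarrow> irreducible_in X G' \<Longrightarrow> G' = G"
  using assms unfolding irreducible_component_def by simp_all

lemma irrD: "irreducible_in X S \<Longrightarrow> S \<subseteq> topspace X" "irreducible_in X S \<Longrightarrow> S \<noteq> {}"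
  unfolding irreducible_in_def by simp_all

context
  fixes k r :: nat and d :: "nat \<Rightarrow> nat" and \<Gamma> :: "(nat \<Rightarrow> (complex \<times> complex) set) set set"
  assumes comp: "irreducible_component (sym_zariski k r) (decomp_set d k (Wtensor d k)) \<Gamma>"
begin

lemma G_sub: "\<Gamma> \<subseteq> decomp_set d k (Wtensor d k)" using compD(1)[OF comp] .
lemma G_irr: "irreducible_in (sym_zariski k r) \<Gamma>" using compD(2)[OF comp] .
lemma G_top: "\<Gamma> \<subseteq> topspace (sym_zariski k r)" using irrD(1)[OF G_irr] .

lemma inv1:
  assumes s: "s \<noteq> 0" and B: "B \<in> \<Gamma>"
  shows "psi (ej j s) ` B \<in> \<Gamma>"
proof -
  define G' where "G' = (\<Union>s\<in>- {0}. image (psi (ej j s)) ` \<Gamma>)"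
  have irr: "irreducible_in (sym_zariski k r) G'" unfolding G'_def by (rule union_irred_ej[OF G_irr])
  have "\<Gamma> \<subseteq> G'"
  proof
    fix C assume "C \<in> \<Gamma>"
    moreover have "image (psi (ej j 1)) C = C" by (simp add: psi_ej1)
    ultimately have "image (psi (ej j 1)) C \<in> image (psi (ej j 1)) ` \<Gamma>" by (metis imageI)
    moreover have "(1::complex) \<in> - {0}" by simp
    ultimately show "C \<in> G'" unfolding G'_def \<open>image (psi (ej j 1)) C = C\<close> by blast
  qed
  moreover have "G' \<subseteq> decomp_set d k (Wtensor d k)"
  proof
    fix C assume "C \<in> G'"
    then obtain s' C' where "s' \<noteq> 0" "C' \<in> \<Gamma>" "C = psi (ej j s') ` C'" unfolding G'_def by blast
    then show "C \<in> decomp_set d k (Wtensor d k)" using decomp_inv[OF ej_nz] G_sub by blast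
  qed
  ultimately have "G' = \<Gamma>" using compD(3)[OF comp] irr by blast
  moreover have "psi (ej j s) ` B \<in> G'" unfolding G'_def using s B by blast
  ultimately show ?thesis by simp
qed

lemma inv_tau:
  assumes t: "\<forall>i. t i \<noteq> 0" "\<forall>i\<ge>k. t i = 1" and B: "B \<in> \<Gamma>"
  shows "psi t ` B \<in> \<Gamma>"
proof -
  define tn where "tn n = (\<lambda>i. if i < n then t i else 1)" for n
  have "psi (tn n) ` B \<in> \<Gamma>" for n
  proof (induction n)
    case 0
    have "tn 0 = (\<lambda>i. 1)" unfolding tn_def by simp
    then show ?case using B by (simp add: psi_one)
  next
    case (Suc n)
    have e: "psi (tn (Suc n)) p = psi (ej n (t n)) (psi (tn n) p)" for p
      unfolding psi_comp by (rule arg_cong[of _ _ "\<lambda>t. psi t p"]) (auto simp: tn_def ej_def fun_eq_iff less_Suc_eq)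
    have "psi (tn (Suc n)) ` B = psi (ej n (t n)) ` (psi (tn n) ` B)"
      unfolding image_image e ..
    then show ?case using inv1[OF _ Suc.IH] t(1) by simp
  qed
  moreover have "tn k = t" unfolding tn_def using t(2) by (auto simp: fun_eq_iff)
  ultimately show ?thesis by metis
qed

lemma gen_point:
  assumes d: "\<forall>i<k. d i \<ge> 2" and A: "A \<in> \<Gamma>"
  shows "\<exists>q\<in>A. \<forall>i<k. \<exists>a b. a \<noteq> 0 \<and> b \<noteq> 0 \<and> q i = line (a, b)"
proof -
  have "A \<in> decomp_set d k (Wtensor d k)" using A G_sub by blast
  then have "in_span d k (Wtensor d k) A" by (rule decompD)
  then obtain c v where fin: "finite A" and cv: "\<forall>p\<in>A. \<forall>i<k. v p i \<noteq> 0 \<and> p i = line (v p i)"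
    "Wtensor d k = (\<lambda>e. \<Sum>p\<in>A. c p * nuv d k (v p) e)" by (rule in_spanE)
  define e1 where "e1 = (\<lambda>i::nat. if i < k then 1 else (0::nat))"
  have mi: "mindex d k e1" unfolding mindex_def e1_def using d by auto
  have "Wtensor d k e1 = 1" unfolding Wtensor_def using mi by (simp add: e1_def)
  then have "(\<Sum>p\<in>A. c p * nuv d k (v p) e1) \<noteq> 0" using cv(2) by (metis one_neq_zero)
  then obtain q where q: "q \<in> A" "c q * nuv d k (v q) e1 \<noteq> 0" by (meson sum.neutral)
  then have nz: "(\<Prod>i<k. of_nat (d i choose e1 i) * fst (v q i) ^ (d i - e1 i) * snd (v q i) ^ e1 i) \<noteq> 0"
    unfolding nuv_def using mi by (auto split: if_splits)
  have "\<exists>a b. a \<noteq> 0 \<and> b \<noteq> 0 \<and> q i = line (a, b)" if i: "i < k" for i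
  proof -
    have "of_nat (d i choose e1 i) * fst (v q i) ^ (d i - e1 i) * snd (v q i) ^ e1 i \<noteq> 0"
      using nz i by (simp add: prod_zero_iff)
    moreover have "e1 i = 1" using i unfolding e1_def by simp
    moreover have "d i - 1 \<noteq> 0" using d i by auto
    ultimately have "fst (v q i) \<noteq> 0" "snd (v q i) \<noteq> 0" by auto
    moreover have "q i = line (fst (v q i), snd (v q i))" using cv(1) q(1) i by simp
    ultimately show ?thesis by blast
  qed
  then show ?thesis using q(1) by blast
qed

end




lemma orb_mem: "A \<in> orb A j"
proof (induction j)
  case 0 then show ?case by simp
next
  case (Suc j)
  have "image (psi (ej j 1)) A = A" by (simp add: psi_ej1)
  then have m: "A \<in> image (psi (ej j 1)) ` orb A j" using Suc.IH by (metis imageI)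
  have o: "(1::complex) \<in> - {0}" by simp
  show ?case unfolding orb.simps by (rule UN_I[of 1 "-{0}" A "\<lambda>s. image (psi (ej j s)) ` orb A j", OF o m])
qed

lemma orb_mono: "orb A j \<subseteq> orb A (Suc j)"
proof
  fix B assume "B \<in> orb A j"
  moreover have "image (psi (ej j 1)) B = B" by (simp add: psi_ej1)
  ultimately have m: "B \<in> image (psi (ej j 1)) ` orb A j" by (metis imageI)
  have o: "(1::complex) \<in> - {0}" by simp
  show "B \<in> orb A (Suc j)" unfolding orb.simps by (rule UN_I[of 1 "-{0}" B "\<lambda>s. image (psi (ej j s)) ` orb A j", OF o m])
qed

lemma orb_tau: "B \<in> orb A j \<Longrightarrow> \<exists>t. (\<forall>i. t i \<noteq> 0) \<and> (\<forall>i\<ge>j. t i = 1) \<and> B = psi t ` A"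
proof (induction j arbitrary: B)
  case 0
  then have "B = psi (\<lambda>i. 1) ` A" by (simp add: psi_one)
  then show ?case by (intro exI[of _ "\<lambda>i. 1"]) simp
next
  case (Suc j)
  then obtain s B' where s: "s \<noteq> 0" "B' \<in> orb A j" "B = psi (ej j s) ` B'" by auto
  obtain t where t: "\<forall>i. t i \<noteq> 0" "\<forall>i\<ge>j. t i = 1" "B' = psi t ` A" using Suc.IH[OF s(2)] by blast
  define t' where "t' = (\<lambda>i. ej j s i * t i)"
  have "B = psi t' ` A" unfolding s(3) t(3) image_image psi_comp t'_def ..
  moreover have "\<forall>i. t' i \<noteq> 0" unfolding t'_def using t(1) ej_nz[OF s(1)] by simp
  moreover have "\<forall>i\<ge>Suc j. t' i = 1" unfolding t'_def ej_def using t(2) by simp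
  ultimately show ?case by blast
qed

lemma orb_irr: "A \<in> topspace (sym_zariski k r) \<Longrightarrow> irreducible_in (sym_zariski k r) (orb A j)"
proof (induction j)
  case 0 then show ?case by (simp add: sing_irred)
next
  case (Suc j)
  show ?case unfolding orb.simps by (rule union_irred_ej[OF Suc.IH[OF Suc.prems]])
qed

context
  fixes k r :: nat and d :: "nat \<Rightarrow> nat" and \<Gamma> :: "(nat \<Rightarrow> (complex \<times> complex) set) set set"
  assumes comp: "irreducible_component (sym_zariski k r) (decomp_set d k (Wtensor d k)) \<Gamma>"
begin

lemma orb_G: "A \<in> \<Gamma> \<Longrightarrow> orb A j \<subseteq> \<Gamma>"
proof (induction j)
  case 0 then show ?case by simp
next
  case (Suc j)
  show ?case
  proof
    fix B assume "B \<in> orb A (Suc j)"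
    then obtain s B' where s: "s \<noteq> 0" "B' \<in> orb A j" "B = psi (ej j s) ` B'" by auto
    then have "B' \<in> \<Gamma>" using Suc by blast
    then show "B \<in> \<Gamma>" using inv1[OF comp s(1)] s(3) by blast
  qed
qed

lemma main:
  assumes d: "\<forall>i<k. d i \<ge> 2"
  shows "dim_ge (sym_zariski k r) \<Gamma> k
    \<and> (\<forall>p\<in>P1k k. (\<forall>i<k. p i \<noteq> line (1, 0) \<and> p i \<noteq> line (0, 1)) \<longrightarrow> (\<exists>A\<in>\<Gamma>. p \<in> A))"
proof
  obtain A where A: "A \<in> \<Gamma>" using irrD(2)[OF G_irr[OF comp]] by blast
  have AD: "A \<in> decomp_set d k (Wtensor d k)" using A G_sub[OF comp] by blast
  have AP: "A \<subseteq> P1k k" using decompD(1)[OF AD] .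
  have finA: "finite A" using decompD(3)[OF AD] by (rule in_spanE)
  have Atop: "A \<in> topspace (sym_zariski k r)" using A G_top[OF comp] by blast
  obtain q where q: "q \<in> A" "\<forall>i<k. \<exists>a b. a \<noteq> 0 \<and> b \<noteq> 0 \<and> q i = line (a, b)"
    using gen_point[OF comp d A] by blast
  let ?X = "sym_zariski k r"
  define Z where "Z j = \<Gamma> \<inter> (?X closure_of orb A j)" for j
  have orbtop: "orb A j \<subseteq> topspace ?X" for j using orb_G[OF A] G_top[OF comp] by blast
  have orbZ: "orb A j \<subseteq> Z j" for j
    unfolding Z_def using orb_G[OF A] closure_of_subset[OF orbtop] by blast
  have Zcl: "closedin (subtopology ?X \<Gamma>) (Z j)" for j
    unfolding closedin_subtopology Z_def by (intro exI[of _ "?X closure_of orb A j"]) auto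
  have Zirr: "irreducible_in ?X (Z j)" for j
    by (rule closure_irred[OF orb_irr[OF Atop] orbZ]) (simp add: Z_def)
  have Zstrict: "Z j \<subset> Z (Suc j)" if j: "j < k" for j
  proof -
    obtain a b where ab: "a \<noteq> 0" "b \<noteq> 0" "q j = line (a, b)" using q(2) j by blast
    define K where "K = {B \<in> topspace ?X. \<exists>p\<in>B. p j = line (a, b)}"
    have Kc: "closedin ?X K" unfolding K_def by (rule K_closed[OF j ab(1,2)])
    have orbK: "orb A j \<subseteq> K"
    proof
      fix B assume B: "B \<in> orb A j"
      obtain t where t: "\<forall>i. t i \<noteq> 0" "\<forall>i\<ge>j. t i = 1" "B = psi t ` A" using orb_tau[OF B] by blast
      have "psi t q \<in> B" using t(3) q(1) by blast
      moreover have "psi t q j = line (a, b)" using psi_line[of q j a b t, OF ab(3)] t(2) by simp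
      moreover have "B \<in> topspace ?X" using B orbtop by blast
      ultimately show "B \<in> K" unfolding K_def by blast
    qed
    have ZK: "Z j \<subseteq> K" unfolding Z_def using closure_of_minimal[OF orbK Kc] by blast
    have "\<forall>p\<in>A. \<exists>V. V \<noteq> 0 \<and> p j = line V"
    proof
      fix p assume "p \<in> A"
      then have "p \<in> P1k k" using AP by (rule subsetD[rotated])
      then show "\<exists>V. V \<noteq> 0 \<and> p j = line V" using P1kD1 j by blast
    qed
    then obtain V where V: "\<forall>p\<in>A. V p \<noteq> 0 \<and> p j = line (V p)" by (rule bchoice[THEN exE])
    define bad where "bad = (\<lambda>p. fst (V p) * b / (snd (V p) * a)) ` A"
    have "finite bad" unfolding bad_def using finA by simp
    then have "infinite (- {0} - bad)" by (rule Diff_infinite_finite[OF _ infinite_nz])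
    then have "- {0} - bad \<noteq> {}" by (metis finite.emptyI)
    then obtain s0 where "s0 \<in> - {0} - bad" by blast
    then have s0: "s0 \<noteq> 0" "s0 \<notin> bad" by simp_all
    define B0 where "B0 = psi (ej j s0) ` A"
    have B0K: "B0 \<notin> K"
    proof
      assume "B0 \<in> K"
      then obtain p' where p': "p' \<in> B0" "p' j = line (a, b)" unfolding K_def by blast
      then obtain p where p: "p \<in> A" "p' = psi (ej j s0) p" unfolding B0_def by blast
      have Vp: "V p \<noteq> 0" "p j = line (fst (V p), snd (V p))" using V p(1) by simp_all
      have "p' j = line (fst (V p), s0 * snd (V p))"
        using psi_line[of p j "fst (V p)" "snd (V p)" "ej j s0", OF Vp(2)] p(2) by (simp add: ej_def)
      then have det: "fst (V p) * b = s0 * snd (V p) * a" using p'(2) line_eq_det by metis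
      show False
      proof (cases "snd (V p) = 0")
        case True
        then have "fst (V p) \<noteq> 0" using Vp(1) by (cases "V p") (simp add: zero_prod_def)
        then show False using det True ab(2) by simp
      next
        case False
        then have "s0 = fst (V p) * b / (snd (V p) * a)" using det ab(1) by (simp add: field_simps)
        then have "s0 \<in> bad" unfolding bad_def using p(1) by blast
        then show False using s0(2) by simp
      qed
    qed
    have "B0 \<in> image (psi (ej j s0)) ` orb A j" unfolding B0_def using orb_mem[of A j] by (rule imageI)
    moreover have "s0 \<in> - {0}" using s0(1) by simp
    ultimately have "B0 \<in> orb A (Suc j)" unfolding orb.simps
      by (rule UN_I[of s0 "-{0}" B0 "\<lambda>s. image (psi (ej j s)) ` orb A j", rotated])
    then have B0Z: "B0 \<in> Z (Suc j)" using orbZ by blast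
    have "Z j \<subseteq> Z (Suc j)"
      unfolding Z_def using closure_of_mono[OF orb_mono[of A j]] by blast
    moreover have "Z j \<noteq> Z (Suc j)" using B0Z B0K ZK by blast
    ultimately show ?thesis by blast
  qed
  show "dim_ge ?X \<Gamma> k" unfolding dim_ge_def
    using Zcl Zirr Zstrict by (intro exI[of _ Z]) blast
next
  show "\<forall>p\<in>P1k k. (\<forall>i<k. p i \<noteq> line (1, 0) \<and> p i \<noteq> line (0, 1)) \<longrightarrow> (\<exists>A\<in>\<Gamma>. p \<in> A)"
  proof (intro ballI impI)
    fix p0 assume p0: "p0 \<in> P1k k" and gp: "\<forall>i<k. p0 i \<noteq> line (1, 0) \<and> p0 i \<noteq> line (0, 1)"
    obtain A where A: "A \<in> \<Gamma>" using irrD(2)[OF G_irr[OF comp]] by blast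
    have AP: "A \<subseteq> P1k k" using decompD(1) A G_sub[OF comp] by blast
    obtain q where q: "q \<in> A" "\<forall>i<k. \<exists>a b. a \<noteq> 0 \<and> b \<noteq> 0 \<and> q i = line (a, b)"
      using gen_point[OF comp d A] by blast
    have "\<forall>i. \<exists>w. i < k \<longrightarrow> fst w \<noteq> 0 \<and> snd w \<noteq> 0 \<and> q i = line w"
    proof
      fix i
      show "\<exists>w. i < k \<longrightarrow> fst w \<noteq> 0 \<and> snd w \<noteq> 0 \<and> q i = line w"
      proof (cases "i < k")
        case True
        then obtain a b where "a \<noteq> 0" "b \<noteq> 0" "q i = line (a, b)" using q(2) by blast
        then show ?thesis by (intro exI[of _ "(a, b)"]) simp
      qed simp
    qed
    then obtain W where W: "\<forall>i. i < k \<longrightarrow> fst (W i) \<noteq> 0 \<and> snd (W i) \<noteq> 0 \<and> q i = line (W i)"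
      by (rule choice[THEN exE])
    have p0g: "\<exists>w. fst w \<noteq> 0 \<and> snd w \<noteq> 0 \<and> p0 i = line w" if i: "i < k" for i
    proof -
      obtain w where w: "w \<noteq> 0" "p0 i = line w" using P1kD1[OF p0 i] by blast
      have "fst w \<noteq> 0"
      proof
        assume f0: "fst w = 0"
        then have "snd w \<noteq> 0" using w(1) by (cases w) (simp add: zero_prod_def)
        then have "line w = line (snd w * 0, snd w * 1)" using f0 by (cases w) simp
        also have "\<dots> = line (0, 1)" using \<open>snd w \<noteq> 0\<close> by (rule line_scale)
        finally show False using gp i w(2) by simp
      qed
      moreover have "snd w \<noteq> 0"
      proof
        assume f0: "snd w = 0"
        then have "line w = line (fst w * 1, fst w * 0)" by (cases w) simp
        also have "\<dots> = line (1, 0)" using \<open>fst w \<noteq> 0\<close> by (rule line_scale)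
        finally show False using gp i w(2) by simp
      qed
      ultimately show ?thesis using w(2) by blast
    qed
    have "\<forall>i. \<exists>w. i < k \<longrightarrow> fst w \<noteq> 0 \<and> snd w \<noteq> 0 \<and> p0 i = line w"
    proof
      fix i
      show "\<exists>w. i < k \<longrightarrow> fst w \<noteq> 0 \<and> snd w \<noteq> 0 \<and> p0 i = line w"
        using p0g by (cases "i < k") auto
    qed
    then obtain P where P: "\<forall>i. i < k \<longrightarrow> fst (P i) \<noteq> 0 \<and> snd (P i) \<noteq> 0 \<and> p0 i = line (P i)"
      by (rule choice[THEN exE])
    define t where "t i = (if i < k then (fst (W i) * snd (P i)) / (fst (P i) * snd (W i)) else 1)" for i
    have tnz: "\<forall>i. t i \<noteq> 0" unfolding t_def using W P by simp
    have t1: "\<forall>i\<ge>k. t i = 1" unfolding t_def by simp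
    have "psi t q = p0"
    proof
      fix i
      show "psi t q i = p0 i"
      proof (cases "i < k")
        case True
        have Wi: "fst (W i) \<noteq> 0 \<and> snd (W i) \<noteq> 0 \<and> q i = line (W i)" using W True by blast
        have Pi: "fst (P i) \<noteq> 0 \<and> snd (P i) \<noteq> 0 \<and> p0 i = line (P i)" using P True by blast
        have n1: "fst (W i) \<noteq> 0" "snd (W i) \<noteq> 0" using Wi by simp_all
        have n2: "fst (P i) \<noteq> 0" "snd (P i) \<noteq> 0" using Pi by simp_all
        have qi: "q i = line (fst (W i), snd (W i))" using Wi by simp
        have ti: "t i = (fst (W i) * snd (P i)) / (fst (P i) * snd (W i))" unfolding t_def using True by simp
        have e1: "t i * snd (W i) = (fst (W i) / fst (P i)) * snd (P i)"
          unfolding ti using n1 n2 by (simp add: field_simps)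
        have e2: "(fst (W i) / fst (P i)) * fst (P i) = fst (W i)" using n2 by simp
        have "psi t q i = line (fst (W i), t i * snd (W i))" using psi_line[of q i "fst (W i)" "snd (W i)" t, OF qi] .
        also have "\<dots> = line ((fst (W i) / fst (P i)) * fst (P i), (fst (W i) / fst (P i)) * snd (P i))"
          by (simp only: e1 e2)
        also have "\<dots> = line (fst (P i), snd (P i))" using n1 n2 by (intro line_scale) simp
        also have "\<dots> = p0 i" using Pi by simp
        finally show ?thesis .
      next
        case False
        then have ki: "k \<le> i" by simp
        have "q \<in> P1k k" using AP q(1) by (rule subsetD)
        have qe: "q i = {}" using P1kD2[OF \<open>q \<in> P1k k\<close> ki] .
        have pe: "p0 i = {}" using P1kD2[OF p0 ki] .
        show ?thesis unfolding psi_def qe pe by simp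
      qed
    qed
    moreover have "psi t ` A \<in> \<Gamma>" using inv_tau[OF comp tnz t1 A] .
    moreover have "psi t q \<in> psi t ` A" using q(1) by (rule imageI)
    ultimately show "\<exists>A\<in>\<Gamma>. p0 \<in> A" by (intro bexI[of _ "psi t ` A"]) simp_all
  qed
qed

end



theorem proposition5p4:
  fixes k :: nat and d :: "nat \<Rightarrow> nat" and \<Gamma> :: "(nat \<Rightarrow> (complex \<times> complex) set) set set"
  assumes "k \<ge> 1"
    and "\<forall>i<k. d i \<ge> 2"
    and "irreducible_component (sym_zariski k (SV_rank d k (Wtensor d k)))
           (decomp_set d k (Wtensor d k)) \<Gamma>"
  shows "dim_ge (sym_zariski k (SV_rank d k (Wtensor d k))) \<Gamma> k
    \<and> (\<forall>p\<in>P1k k. (\<forall>i<k. p i \<noteq> line (1, 0) \<and> p i \<noteq> line (0, 1)) \<longrightarrow> (\<exists>A\<in>\<Gamma>. p \<in> A))"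
  by (rule main[OF assms(3) assms(2)])

end
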